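(* The preordering associated with the box $[-1,1]^n$ is included in the quadratic module of the unit ball. In particular, for every $d\in\mathbb N$, $$\mathcal O_d(1\pm X_i: i\in\{1,\dots,n\})\subset\mathcal Q_{d+n}(1-\|\mathbf X\|_2^2).$$
   Context: $\Sigma^2$ is the cone of sums of squares in $\mathbb R[X_1,\dots,X_n]$, $\|\mathbf X\|_2^2=\sum X_i^2$. For polynomials $h_1,\dots,h_k$: $\mathcal Q(h_1,\dots,h_k)=\Sigma^2+\sum_j\Sigma^2h_j$, $\mathcal Q_d(h_1,\dots,h_k)=\{s_0+\sum_js_jh_j: s_j\in\Sigma^2,\deg s_0\le d,\deg(s_jh_j)\le d\}$; the preordering is $\mathcal O(h_1,\dots,h_k)=\mathcal Q(\prod_{j\in J}h_j: J\subset\{1,\dots,k\})$ and $\mathcal O_d(h_1,\dots,h_k)=\mathcal Q_d(\prod_{j\in J}h_j:J\subset\{1,\dots,k\})$. Here the $2n$ generators are $1+X_i$ and $1-X_i$, $i=1,\dots,n$. *)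

theory Defs
  imports Complex_Main "HOL-Library.Poly_Mapping"
begin

text \<open>The polynomial ring R[X_1,...,X_n] is modelled by the polynomials whose monomials
only involve the variables 0,...,n-1 (variable X_(i+1) has index i).\<close>

type_synonym mpoly = "(nat \<Rightarrow>\<^sub>0 nat) \<Rightarrow>\<^sub>0 real"

definition Var :: "nat \<Rightarrow> mpoly" where
  "Var i = Poly_Mapping.single (Poly_Mapping.single i 1) 1"

definition mdeg :: "(nat \<Rightarrow>\<^sub>0 nat) \<Rightarrow> nat" where
  "mdeg m = (\<Sum>i\<in>Poly_Mapping.keys m. Poly_Mapping.lookup m i)"

text \<open>Total degree (the zero polynomial gets degree 0).\<close>
definition tdeg :: "mpoly \<Rightarrow> nat" where
  "tdeg p = Max (insert 0 (mdeg ` Poly_Mapping.keys p))"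

definition poly_in :: "nat \<Rightarrow> mpoly \<Rightarrow> bool" where
  "poly_in n p \<longleftrightarrow> (\<forall>m\<in>Poly_Mapping.keys p. Poly_Mapping.keys m \<subseteq> {..<n})"

definition SOS :: "nat \<Rightarrow> mpoly set" where
  "SOS n = {p. \<exists>qs. (\<forall>q\<in>set qs. poly_in n q) \<and> p = sum_list (map (\<lambda>q. q ^ 2) qs)}"

definition QM :: "nat \<Rightarrow> 'i set \<Rightarrow> ('i \<Rightarrow> mpoly) \<Rightarrow> mpoly set" where
  "QM n J h = {p. \<exists>s0 s. s0 \<in> SOS n \<and> (\<forall>j\<in>J. s j \<in> SOS n) \<and>
       p = s0 + (\<Sum>j\<in>J. s j * h j)}"

definition QM_deg :: "nat \<Rightarrow> nat \<Rightarrow> 'i set \<Rightarrow> ('i \<Rightarrow> mpoly) \<Rightarrow> mpoly set" where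
  "QM_deg n d J h = {p. \<exists>s0 s. s0 \<in> SOS n \<and> (\<forall>j\<in>J. s j \<in> SOS n) \<and>
       tdeg s0 \<le> d \<and> (\<forall>j\<in>J. tdeg (s j * h j) \<le> d) \<and>
       p = s0 + (\<Sum>j\<in>J. s j * h j)}"

definition PO :: "nat \<Rightarrow> 'i set \<Rightarrow> ('i \<Rightarrow> mpoly) \<Rightarrow> mpoly set" where
  "PO n J h = QM n (Pow J) (\<lambda>K. \<Prod>j\<in>K. h j)"

definition PO_deg :: "nat \<Rightarrow> nat \<Rightarrow> 'i set \<Rightarrow> ('i \<Rightarrow> mpoly) \<Rightarrow> mpoly set" where
  "PO_deg n d J h = QM_deg n d (Pow J) (\<lambda>K. \<Prod>j\<in>K. h j)"

definition box_gen :: "nat \<times> bool \<Rightarrow> mpoly" where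
  "box_gen ib = (if snd ib then 1 + Var (fst ib) else 1 - Var (fst ib))"

definition box_idx :: "nat \<Rightarrow> (nat \<times> bool) set" where
  "box_idx n = {..<n} \<times> UNIV"

definition ball_gen :: "nat \<Rightarrow> unit \<Rightarrow> mpoly" where
  "ball_gen n _ = 1 - (\<Sum>i<n. Var i ^ 2)"

end

theory Submission imports Defs begin

lemma mdeg_sum_superset:
  assumes "finite S" "Poly_Mapping.keys m \<subseteq> S"
  shows "mdeg m = (\<Sum>i\<in>S. Poly_Mapping.lookup m i)"
  unfolding mdeg_def
  by (rule sum.mono_neutral_left) (use assms in \<open>auto simp: in_keys_iff\<close>)

lemma mdeg_add: "mdeg (a + b) = mdeg a + mdeg b"
proof -
  let ?S = "Poly_Mapping.keys a \<union> Poly_Mapping.keys b"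
  have "mdeg (a+b) = (\<Sum>i\<in>?S. Poly_Mapping.lookup (a+b) i)"
    using keys_add[of a b] by (intro mdeg_sum_superset) auto
  also have "\<dots> = (\<Sum>i\<in>?S. Poly_Mapping.lookup a i) + (\<Sum>i\<in>?S. Poly_Mapping.lookup b i)"
    by (simp add: lookup_add sum.distrib)
  also have "\<dots> = mdeg a + mdeg b"
    by (subst (1 2) mdeg_sum_superset[of ?S]) auto
  finally show ?thesis .
qed

lemma mdeg_single: "mdeg (Poly_Mapping.single i 1) = 1"
  unfolding mdeg_def by simp

lemma mdeg_zero[simp]: "mdeg 0 = 0"
  unfolding mdeg_def by simp

lemma tdeg_le_iff: "tdeg p \<le> D \<longleftrightarrow> (\<forall>m\<in>Poly_Mapping.keys p. mdeg m \<le> D)"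
  unfolding tdeg_def by (subst Max_le_iff) auto

lemma mdeg_le_tdeg: "m \<in> Poly_Mapping.keys p \<Longrightarrow> mdeg m \<le> tdeg p"
  using tdeg_le_iff[of p "tdeg p"] by auto

lemma tdeg_add_le: "tdeg p \<le> D \<Longrightarrow> tdeg q \<le> D \<Longrightarrow> tdeg (p + q) \<le> D"
  unfolding tdeg_le_iff
proof (intro ballI)
  fix m assume A: "\<forall>m\<in>Poly_Mapping.keys p. mdeg m \<le> D" "\<forall>m\<in>Poly_Mapping.keys q. mdeg m \<le> D"
    and "m \<in> Poly_Mapping.keys (p + q)"
  then have "m \<in> Poly_Mapping.keys p \<union> Poly_Mapping.keys q" using keys_add[of p q] by (rule_tac subsetD)
  then show "mdeg m \<le> D" using A by (elim UnE) simp_all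
qed

lemma tdeg_minus[simp]: "tdeg (- p) = tdeg p"
  unfolding tdeg_def by simp

lemma tdeg_diff_le: "tdeg p \<le> D \<Longrightarrow> tdeg q \<le> D \<Longrightarrow> tdeg (p - q) \<le> D"
  using tdeg_add_le[of p D "- q"] by simp

lemma tdeg_mult_le: "tdeg p \<le> D1 \<Longrightarrow> tdeg q \<le> D2 \<Longrightarrow> tdeg (p * q) \<le> D1 + D2"
  unfolding tdeg_le_iff
proof
  fix m assume A: "\<forall>m\<in>Poly_Mapping.keys p. mdeg m \<le> D1" "\<forall>m\<in>Poly_Mapping.keys q. mdeg m \<le> D2"
    and "m \<in> Poly_Mapping.keys (p * q)"
  then obtain a b where "m = a + b" "a \<in> Poly_Mapping.keys p" "b \<in> Poly_Mapping.keys q"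
    using keys_mult[of p q] by blast
  then show "mdeg m \<le> D1 + D2" using A by (simp add: mdeg_add add_mono)
qed

lemma tdeg_mono: "tdeg p \<le> D \<Longrightarrow> D \<le> E \<Longrightarrow> tdeg p \<le> E" by simp

lemma tdeg_single0: "tdeg (Poly_Mapping.single 0 c) = 0"
  by (simp add: tdeg_def)

lemma tdeg_one[simp]: "tdeg 1 = 0"
  by (simp add: tdeg_def)

lemma tdeg_zero[simp]: "tdeg 0 = 0"
  by (simp add: tdeg_def)

lemma tdeg_Var: "tdeg (Var i) \<le> 1"
  by (simp add: tdeg_le_iff Var_def mdeg_def)

lemma tdeg_sum_le: "finite I \<Longrightarrow> (\<And>i. i \<in> I \<Longrightarrow> tdeg (f i) \<le> D) \<Longrightarrow> tdeg (sum f I) \<le> D"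
  by (induction I rule: finite_induct) (auto intro: tdeg_add_le)

lemma lookup_mult_Var: "Poly_Mapping.lookup (p * Var i) (m + Poly_Mapping.single i 1) = Poly_Mapping.lookup p m"
proof -
  let ?e = "Poly_Mapping.single i (1::nat)"
  have 1: "(\<Sum>aa. (Poly_Mapping.lookup (Poly_Mapping.single ?e (1::real)) aa when m + ?e = a + aa))
      = (if m = a then 1 else 0)" for a
  proof -
    have eq: "(\<lambda>aa. (Poly_Mapping.lookup (Poly_Mapping.single ?e (1::real)) aa when m + ?e = a + aa))
       = (\<lambda>aa. if ?e = aa then (if m = a then 1 else 0) else 0)"
      by (auto simp: lookup_single when_def fun_eq_iff)
    show ?thesis unfolding eq by (cases "m = a") auto
  qed
  have 2: "(\<lambda>a. Poly_Mapping.lookup p a * (if m = a then 1 else 0)) = (\<lambda>a. if m = a then Poly_Mapping.lookup p a else 0)"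
    by auto
  show ?thesis
    unfolding Var_def lookup_mult 1 2 by simp
qed


lemma tdeg_attained:
  assumes "p \<noteq> 0" shows "\<exists>m\<in>Poly_Mapping.keys p. mdeg m = tdeg p"
proof -
  have ne: "mdeg ` Poly_Mapping.keys p \<noteq> {}" using assms by simp
  have "tdeg p = Max (mdeg ` Poly_Mapping.keys p)"
    unfolding tdeg_def using ne by (simp add: Max_insert max_def)
  moreover have "Max (mdeg ` Poly_Mapping.keys p) \<in> mdeg ` Poly_Mapping.keys p"
    using ne by (intro Max_in) auto
  ultimately show ?thesis by auto
qed

lemma box_gen_lower:
  assumes "p \<noteq> 0"
  shows "p * box_gen j \<noteq> 0 \<and> tdeg p + 1 \<le> tdeg (p * box_gen j)"
proof -
  obtain i b where j: "j = (i, b)" by (cases j)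
  obtain m where m: "m \<in> Poly_Mapping.keys p" "mdeg m = tdeg p"
    using tdeg_attained[OF assms] by blast
  let ?e = "Poly_Mapping.single i (1::nat)"
  have de: "mdeg (m + ?e) = tdeg p + 1" using m mdeg_add[of m ?e] mdeg_single[of i] by simp
  have z: "Poly_Mapping.lookup p (m + ?e) = 0"
  proof (rule ccontr)
    assume "Poly_Mapping.lookup p (m + ?e) \<noteq> 0"
    then have "m + ?e \<in> Poly_Mapping.keys p" by (simp add: in_keys_iff)
    from mdeg_le_tdeg[OF this] de show False by simp
  qed
  have nz: "Poly_Mapping.lookup p m \<noteq> 0" using m by (simp add: in_keys_iff)
  have "Poly_Mapping.lookup (p * box_gen j) (m + ?e) \<noteq> 0"
    using z nz lookup_mult_Var[of p i m]
    by (cases b) (auto simp: j box_gen_def algebra_simps lookup_add lookup_minus)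
  then have k: "m + ?e \<in> Poly_Mapping.keys (p * box_gen j)" by (simp add: in_keys_iff)
  then have "p * box_gen j \<noteq> 0" by auto
  moreover have "tdeg p + 1 \<le> tdeg (p * box_gen j)" using mdeg_le_tdeg[OF k] de by simp
  ultimately show ?thesis by blast
qed

lemma prod_lower:
  assumes "finite K" "s \<noteq> 0"
  shows "s * (\<Prod>j\<in>K. box_gen j) \<noteq> 0 \<and> tdeg s + card K \<le> tdeg (s * (\<Prod>j\<in>K. box_gen j))"
  using assms(1)
proof (induction K rule: finite_induct)
  case empty then show ?case using assms(2) by simp
next
  case (insert x F)
  have eq: "s * (\<Prod>j\<in>insert x F. box_gen j) = (s * (\<Prod>j\<in>F. box_gen j)) * box_gen x"
    using insert by (simp add: algebra_simps)
  show ?case unfolding eq using box_gen_lower[of "s * (\<Prod>j\<in>F. box_gen j)" x] insert by auto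
qed


lemma poly_in_add: "poly_in n p \<Longrightarrow> poly_in n q \<Longrightarrow> poly_in n (p + q)"
  unfolding poly_in_def using keys_add[of p q] by blast

lemma poly_in_uminus: "poly_in n p \<Longrightarrow> poly_in n (- p)"
  unfolding poly_in_def by simp

lemma poly_in_diff: "poly_in n p \<Longrightarrow> poly_in n q \<Longrightarrow> poly_in n (p - q)"
  using poly_in_add[of n p "- q"] poly_in_uminus[of n q] by simp

lemma poly_in_mult: "poly_in n p \<Longrightarrow> poly_in n q \<Longrightarrow> poly_in n (p * q)"
  unfolding poly_in_def
proof
  fix m assume A: "\<forall>m\<in>Poly_Mapping.keys p. Poly_Mapping.keys m \<subseteq> {..<n}"
    "\<forall>m\<in>Poly_Mapping.keys q. Poly_Mapping.keys m \<subseteq> {..<n}" and "m \<in> Poly_Mapping.keys (p * q)"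
  then obtain a b where "m = a + b" "a \<in> Poly_Mapping.keys p" "b \<in> Poly_Mapping.keys q"
    using keys_mult[of p q] by blast
  then show "Poly_Mapping.keys m \<subseteq> {..<n}" using A keys_add[of a b] by blast
qed

lemma poly_in_single0: "poly_in n (Poly_Mapping.single 0 c)"
  unfolding poly_in_def by simp

lemma poly_in_one: "poly_in n 1"
  unfolding poly_in_def by simp

lemma poly_in_zero: "poly_in n 0"
  unfolding poly_in_def by simp

lemma poly_in_Var: "i < n \<Longrightarrow> poly_in n (Var i)"
  unfolding poly_in_def Var_def by simp

lemma poly_in_power: "poly_in n p \<Longrightarrow> poly_in n (p ^ k)"
  by (induction k) (auto intro: poly_in_mult poly_in_one)

lemma poly_in_sum: "(\<And>i. i \<in> I \<Longrightarrow> poly_in n (f i)) \<Longrightarrow> poly_in n (sum f I)"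
  by (induction I rule: infinite_finite_induct) (auto intro: poly_in_add poly_in_zero)

lemma SOS_zero: "0 \<in> SOS n"
  unfolding SOS_def by (rule CollectI, rule exI[of _ "[]"]) simp

lemma SOS_sq: "poly_in n q \<Longrightarrow> q ^ 2 \<in> SOS n"
  unfolding SOS_def by (rule CollectI, rule exI[of _ "[q]"]) simp

lemma SOS_add: "a \<in> SOS n \<Longrightarrow> b \<in> SOS n \<Longrightarrow> a + b \<in> SOS n"
proof -
  assume "a \<in> SOS n" "b \<in> SOS n"
  then obtain qs rs where "\<forall>q\<in>set qs. poly_in n q" "a = sum_list (map (\<lambda>q. q ^ 2) qs)"
    "\<forall>q\<in>set rs. poly_in n q" "b = sum_list (map (\<lambda>q. q ^ 2) rs)"
    unfolding SOS_def by blast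
  then show ?thesis unfolding SOS_def
    by (intro CollectI exI[of _ "qs @ rs"]) auto
qed

lemma SOS_sum: "(\<And>i. i \<in> I \<Longrightarrow> f i \<in> SOS n) \<Longrightarrow> sum f I \<in> SOS n"
  by (induction I rule: infinite_finite_induct) (auto intro: SOS_add SOS_zero)

lemma SOS_sq_mult: "poly_in n q \<Longrightarrow> b \<in> SOS n \<Longrightarrow> q ^ 2 * b \<in> SOS n"
proof -
  assume q: "poly_in n q" "b \<in> SOS n"
  then obtain rs where "\<forall>r\<in>set rs. poly_in n r" "b = sum_list (map (\<lambda>q. q ^ 2) rs)"
    unfolding SOS_def by blast
  moreover have "q ^ 2 * sum_list (map (\<lambda>r. r ^ 2) rs) = sum_list (map (\<lambda>r. (q * r) ^ 2) rs)"
    by (induction rs) (auto simp: algebra_simps power_mult_distrib)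
  ultimately show ?thesis using q unfolding SOS_def
    by (intro CollectI exI[of _ "map (\<lambda>r. q * r) rs"]) (auto intro: poly_in_mult simp: comp_def)
qed

lemma SOS_mult: "a \<in> SOS n \<Longrightarrow> b \<in> SOS n \<Longrightarrow> a * b \<in> SOS n"
proof -
  assume "a \<in> SOS n" and b: "b \<in> SOS n"
  then obtain qs where qs: "\<forall>q\<in>set qs. poly_in n q" "a = sum_list (map (\<lambda>q. q ^ 2) qs)"
    unfolding SOS_def by blast
  have "sum_list (map (\<lambda>q. q ^ 2) qs) * b \<in> SOS n" using qs(1)
    by (induction qs) (auto simp: distrib_right intro: SOS_add SOS_zero SOS_sq_mult b)
  then show ?thesis using qs by simp
qed

definition RR :: "nat \<Rightarrow> nat \<Rightarrow> mpoly \<Rightarrow> bool" where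
  "RR n D p \<longleftrightarrow> (\<exists>\<sigma> \<tau>. \<sigma> \<in> SOS n \<and> \<tau> \<in> SOS n \<and> tdeg \<sigma> \<le> D \<and> tdeg (\<tau> * ball_gen n ()) \<le> D
      \<and> p = \<sigma> + \<tau> * ball_gen n ())"

lemma RR_SOS: "\<sigma> \<in> SOS n \<Longrightarrow> tdeg \<sigma> \<le> D \<Longrightarrow> RR n D \<sigma>"
  unfolding RR_def by (rule exI[of _ \<sigma>], rule exI[of _ 0]) (auto simp: SOS_zero)

lemma RR_mono: "RR n D p \<Longrightarrow> D \<le> E \<Longrightarrow> RR n E p"
  unfolding RR_def by force

lemma RR_add: "RR n D p \<Longrightarrow> RR n D q \<Longrightarrow> RR n D (p + q)"
proof -
  assume "RR n D p" "RR n D q"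
  then obtain s1 t1 s2 t2 where A: "s1 \<in> SOS n" "t1 \<in> SOS n" "tdeg s1 \<le> D" "tdeg (t1 * ball_gen n ()) \<le> D"
      "p = s1 + t1 * ball_gen n ()"
      "s2 \<in> SOS n" "t2 \<in> SOS n" "tdeg s2 \<le> D" "tdeg (t2 * ball_gen n ()) \<le> D"
      "q = s2 + t2 * ball_gen n ()"
    unfolding RR_def by blast
  show ?thesis unfolding RR_def
    apply (rule exI[of _ "s1 + s2"], rule exI[of _ "t1 + t2"])
    using A by (auto simp: algebra_simps intro: SOS_add tdeg_add_le)
qed

lemma RR_zero: "RR n D 0"
  by (rule RR_SOS) (auto simp: SOS_zero)

lemma RR_sum: "(\<And>i. i \<in> I \<Longrightarrow> RR n D (f i)) \<Longrightarrow> RR n D (sum f I)"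
  by (induction I rule: infinite_finite_induct) (auto intro: RR_add RR_zero)

lemma poly_in_ball: "poly_in n (ball_gen n u)"
  unfolding ball_gen_def
  by (intro poly_in_diff poly_in_one poly_in_sum poly_in_power poly_in_Var) auto

lemma RR_mult: "RR n D1 p \<Longrightarrow> RR n D2 q \<Longrightarrow> RR n (D1 + D2) (p * q)"
proof -
  let ?g = "ball_gen n ()"
  assume "RR n D1 p" "RR n D2 q"
  then obtain s1 t1 s2 t2 where A: "s1 \<in> SOS n" "t1 \<in> SOS n" "tdeg s1 \<le> D1" "tdeg (t1 * ?g) \<le> D1"
      "p = s1 + t1 * ?g"
      "s2 \<in> SOS n" "t2 \<in> SOS n" "tdeg s2 \<le> D2" "tdeg (t2 * ?g) \<le> D2"
      "q = s2 + t2 * ?g"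
    unfolding RR_def by blast
  have e1: "p * q = (s1 * s2 + (t1 * t2) * ?g ^ 2) + (s1 * t2 + t1 * s2) * ?g"
    using A by (simp add: algebra_simps power2_eq_square)
  have S: "s1 * s2 + (t1 * t2) * ?g ^ 2 \<in> SOS n"
    using A by (intro SOS_add SOS_mult SOS_sq poly_in_ball)
  have eqg: "(t1 * t2) * ?g ^ 2 = (t1 * ?g) * (t2 * ?g)" by (simp add: algebra_simps power2_eq_square)
  have h1: "tdeg ((t1 * ?g) * (t2 * ?g)) \<le> D1 + D2" by (rule tdeg_mult_le[OF A(4) A(9)])
  have h2: "tdeg (s1 * s2) \<le> D1 + D2" by (rule tdeg_mult_le[OF A(3) A(8)])
  have d1: "tdeg (s1 * s2 + (t1 * t2) * ?g ^ 2) \<le> D1 + D2"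
    unfolding eqg by (rule tdeg_add_le[OF h2 h1])
  have "(s1 * t2 + t1 * s2) * ?g = s1 * (t2 * ?g) + s2 * (t1 * ?g)" by (simp add: algebra_simps)
  then have d2: "tdeg ((s1 * t2 + t1 * s2) * ?g) \<le> D1 + D2"
    using A tdeg_mult_le[of s1 D1 "t2 * ?g" D2] tdeg_mult_le[of s2 D2 "t1 * ?g" D1]
    by (auto intro!: tdeg_add_le simp: add.commute)
  have T: "s1 * t2 + t1 * s2 \<in> SOS n" using A by (intro SOS_add SOS_mult)
  show ?thesis unfolding RR_def using e1 S T d1 d2 by blast
qed

lemma RR_one: "RR n 0 1"
proof -
  have "(1::mpoly) = 1 ^ 2" by simp
  then have "(1::mpoly) \<in> SOS n" using SOS_sq[OF poly_in_one, of n] by simp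
  then show ?thesis by (intro RR_SOS) auto
qed

lemma RR_to_QM: "RR n D p \<Longrightarrow> p \<in> QM_deg n D {()} (ball_gen n)"
proof -
  assume "RR n D p"
  then obtain a b where A: "a \<in> SOS n" "b \<in> SOS n" "tdeg a \<le> D" "tdeg (b * ball_gen n ()) \<le> D"
    "p = a + b * ball_gen n ()" unfolding RR_def by blast
  show ?thesis unfolding QM_deg_def
    by (rule CollectI, rule exI[of _ a], rule exI[of _ "\<lambda>_. b"]) (use A in simp)
qed


lemma tdeg_Var_sq: "tdeg (Var i ^ 2) \<le> 2"
  using tdeg_mult_le[OF tdeg_Var tdeg_Var, of i i] by (simp add: power2_eq_square)

lemma RR_ball: "RR n 2 (ball_gen n ())"
proof -
  have "tdeg (ball_gen n ()) \<le> 2"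
    unfolding ball_gen_def
    by (intro tdeg_diff_le tdeg_sum_le) (auto simp: tdeg_Var_sq)
  then show ?thesis unfolding RR_def
    by (intro exI[of _ 0] exI[of _ 1]) (auto simp: SOS_zero intro: SOS_sq[OF poly_in_one, simplified])
qed

lemma RR_one_minus_sq: assumes "i < n" shows "RR n 2 (1 - Var i ^ 2)"
proof -
  have "(\<Sum>j<n. Var j ^ 2) = Var i ^ 2 + (\<Sum>j\<in>{..<n} - {i}. Var j ^ 2)"
    using assms by (subst sum.remove[of _ i]) auto
  then have eq: "1 - Var i ^ 2 = ball_gen n () + (\<Sum>j\<in>{..<n} - {i}. Var j ^ 2)"
    unfolding ball_gen_def by (simp add: algebra_simps)
  have "RR n 2 (\<Sum>j\<in>{..<n} - {i}. Var j ^ 2)"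
    by (intro RR_sum RR_SOS SOS_sq poly_in_Var tdeg_Var_sq) auto
  then show ?thesis unfolding eq by (intro RR_add RR_ball)
qed

lemma RR_box_gen: assumes "i < n" shows "RR n 2 (box_gen (i, b))"
proof -
  define C :: mpoly where "C = Poly_Mapping.single 0 (1/2)"
  have CC: "C + C = 1" unfolding C_def by (simp flip: single_add)
  have "C = (Poly_Mapping.single 0 (sqrt (1/2))) ^ 2"
    unfolding C_def power2_eq_square mult_single by simp
  then have "C \<in> SOS n" by (simp add: SOS_sq poly_in_single0)
  moreover have "tdeg C = 0" unfolding C_def by (rule tdeg_single0)
  ultimately have RC: "RR n 0 C" by (intro RR_SOS) simp_all
  define x where "x = Var i"
  define y where "y = (if b then 1 + x else 1 - x)"
  have yb: "box_gen (i, b) = y" unfolding box_gen_def y_def x_def by simp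
  have "poly_in n y" unfolding y_def x_def using assms
    by (auto intro: poly_in_add poly_in_diff poly_in_one poly_in_Var)
  moreover have "tdeg y \<le> 1" unfolding y_def x_def
    using tdeg_Var[of i] by (auto intro!: tdeg_add_le tdeg_diff_le)
  ultimately have Ry: "RR n 2 (y ^ 2)"
    using tdeg_mult_le[of y 1 y 1] by (intro RR_SOS SOS_sq) (auto simp: power2_eq_square)
  have Rx: "RR n 2 (1 - x ^ 2)" unfolding x_def using RR_one_minus_sq[OF assms] .
  have "C * y ^ 2 + C * (1 - x ^ 2) = (C + C) * y"
    unfolding y_def by (auto simp: algebra_simps power2_eq_square)
  then have eq: "y = C * y ^ 2 + C * (1 - x ^ 2)" using CC by simp
  have "RR n (0 + 2) (C * y ^ 2 + C * (1 - x ^ 2))"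
    by (rule RR_add[OF RR_mult[OF RC Ry] RR_mult[OF RC Rx]])
  then have "RR n 2 (C * y ^ 2 + C * (1 - x ^ 2))" by (simp only: add_0)
  then show ?thesis unfolding yb using eq[symmetric] by (simp only:)
qed

lemma RR_block:
  assumes "i < n" "K \<subseteq> {i} \<times> UNIV"
  shows "RR n (card K + 1) (\<Prod>j\<in>K. box_gen j)"
proof -
  have "K = {} \<or> K = {(i, True)} \<or> K = {(i, False)} \<or> K = {(i, True), (i, False)}"
  proof -
    have m: "j = (i,True) \<or> j = (i,False)" if "j \<in> K" for j
      using assms(2) that by (cases j; cases "snd j") auto
    show ?thesis
    proof (cases "(i,True) \<in> K"; cases "(i,False) \<in> K")
      assume "(i,True) \<in> K" "(i,False) \<in> K"
      then have "K = {(i, True), (i, False)}" using m by blast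
      then show ?thesis by simp
    next
      assume "(i,True) \<in> K" "(i,False) \<notin> K"
      then have "K = {(i, True)}" using m by blast
      then show ?thesis by simp
    next
      assume "(i,True) \<notin> K" "(i,False) \<in> K"
      then have "K = {(i, False)}" using m by blast
      then show ?thesis by simp
    next
      assume "(i,True) \<notin> K" "(i,False) \<notin> K"
      then have "K = {}" using m by blast
      then show ?thesis by simp
    qed
  qed
  moreover have "RR n 3 (box_gen (i, True) * box_gen (i, False))"
  proof -
    have "box_gen (i, True) * box_gen (i, False) = 1 - Var i ^ 2"
      by (simp add: box_gen_def algebra_simps power2_eq_square)
    then show ?thesis using RR_mono[OF RR_one_minus_sq[OF assms(1)], of 3] by simp
  qed
  ultimately show ?thesis
  proof (elim disjE)
    assume "K = {}" then show ?thesis using RR_mono[OF RR_one[of n], of 1] by simp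
  next
    assume "K = {(i, True)}" then show ?thesis using RR_box_gen[OF assms(1), of True] by (simp add: numeral_2_eq_2)
  next
    assume "K = {(i, False)}" then show ?thesis using RR_box_gen[OF assms(1), of False] by (simp add: numeral_2_eq_2)
  next
    assume K: "K = {(i, True), (i, False)}"
    assume "RR n 3 (box_gen (i, True) * box_gen (i, False))"
    then show ?thesis unfolding K by (simp add: eval_nat_numeral)
  qed
qed

lemma RR_prod_box:
  "m \<le> n \<Longrightarrow> K \<subseteq> {..<m} \<times> UNIV \<Longrightarrow> RR n (card K + m) (\<Prod>j\<in>K. box_gen j)"
proof (induction m arbitrary: K)
  case 0
  then have "K = {}" by auto
  then show ?case using RR_one by simp
next
  case (Suc m)
  define K1 where "K1 = K \<inter> ({..<m} \<times> UNIV)"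
  define K2 where "K2 = K \<inter> ({m} \<times> UNIV)"
  have fin: "finite ({..<Suc m} \<times> (UNIV :: bool set))" by simp
  have fK: "finite K" using Suc.prems(2) finite_subset[OF _ fin] by blast
  have KU: "K = K1 \<union> K2" and disj: "K1 \<inter> K2 = {}"
    using Suc.prems(2) unfolding K1_def K2_def by (auto simp: less_Suc_eq)
  have f1: "finite K1" "finite K2" using fK unfolding K1_def K2_def by auto
  have p: "(\<Prod>j\<in>K. box_gen j) = (\<Prod>j\<in>K1. box_gen j) * (\<Prod>j\<in>K2. box_gen j)"
    using KU disj f1 by (metis prod.union_disjoint)
  have c: "card K = card K1 + card K2" using KU disj f1 by (metis card_Un_disjoint)
  have R1: "RR n (card K1 + m) (\<Prod>j\<in>K1. box_gen j)"
    using Suc unfolding K1_def by auto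
  have R2: "RR n (card K2 + 1) (\<Prod>j\<in>K2. box_gen j)"
    using Suc.prems by (intro RR_block) (auto simp: K2_def)
  show ?case using RR_mult[OF R1 R2] unfolding p c by (simp add: algebra_simps)
qed

lemma main_deg: "PO_deg n d (box_idx n) box_gen \<subseteq> QM_deg n (d + n) {()} (ball_gen n)"
proof
  fix p assume "p \<in> PO_deg n d (box_idx n) box_gen"
  then obtain s0 s where A: "s0 \<in> SOS n" "\<forall>K\<in>Pow (box_idx n). s K \<in> SOS n" "tdeg s0 \<le> d"
    "\<forall>K\<in>Pow (box_idx n). tdeg (s K * (\<Prod>j\<in>K. box_gen j)) \<le> d"
    "p = s0 + (\<Sum>K\<in>Pow (box_idx n). s K * (\<Prod>j\<in>K. box_gen j))"
    unfolding PO_deg_def QM_deg_def by blast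
  have finB: "finite (box_idx n)" unfolding box_idx_def by simp
  have "RR n (d + n) (s K * (\<Prod>j\<in>K. box_gen j))" if K: "K \<in> Pow (box_idx n)" for K
  proof (cases "s K = 0")
    case True then show ?thesis using RR_zero by simp
  next
    case False
    have fK: "finite K" using K finB finite_subset by auto
    have lo: "tdeg (s K) + card K \<le> d"
      using prod_lower[OF fK False] A(4) K by (meson order_trans)
    have "RR n (tdeg (s K)) (s K)" using A(2) K by (intro RR_SOS) auto
    moreover have "RR n (card K + n) (\<Prod>j\<in>K. box_gen j)"
      using K by (intro RR_prod_box) (auto simp: box_idx_def)
    ultimately have "RR n (tdeg (s K) + (card K + n)) (s K * (\<Prod>j\<in>K. box_gen j))"
      by (rule RR_mult)
    then show ?thesis by (rule RR_mono) (use lo in simp)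
  qed
  then have "RR n (d + n) (\<Sum>K\<in>Pow (box_idx n). s K * (\<Prod>j\<in>K. box_gen j))"
    by (intro RR_sum) auto
  moreover have "RR n (d + n) s0" using A by (intro RR_SOS) auto
  ultimately have "RR n (d + n) p" unfolding A(5) by (intro RR_add)
  then show "p \<in> QM_deg n (d + n) {()} (ball_gen n)" by (rule RR_to_QM)
qed

theorem mainTheorem13:
  fixes n :: nat
  shows "PO n (box_idx n) box_gen \<subseteq> QM n {()} (ball_gen n)
    \<and> (\<forall>d. PO_deg n d (box_idx n) box_gen \<subseteq> QM_deg n (d + n) {()} (ball_gen n))"
proof
  show "\<forall>d. PO_deg n d (box_idx n) box_gen \<subseteq> QM_deg n (d + n) {()} (ball_gen n)"
    using main_deg by blast
  show "PO n (box_idx n) box_gen \<subseteq> QM n {()} (ball_gen n)"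
  proof
    fix p assume "p \<in> PO n (box_idx n) box_gen"
    then obtain s0 s where A: "s0 \<in> SOS n" "\<forall>K\<in>Pow (box_idx n). s K \<in> SOS n"
      "p = s0 + (\<Sum>K\<in>Pow (box_idx n). s K * (\<Prod>j\<in>K. box_gen j))"
      unfolding PO_def QM_def by blast
    have finP: "finite (Pow (box_idx n))" unfolding box_idx_def by simp
    define d where "d = tdeg s0 + (\<Sum>K\<in>Pow (box_idx n). tdeg (s K * (\<Prod>j\<in>K. box_gen j)))"
    have "\<forall>K\<in>Pow (box_idx n). tdeg (s K * (\<Prod>j\<in>K. box_gen j)) \<le> d"
    proof
      fix K assume "K \<in> Pow (box_idx n)"
      then have "tdeg (s K * (\<Prod>j\<in>K. box_gen j)) \<le> (\<Sum>K\<in>Pow (box_idx n). tdeg (s K * (\<Prod>j\<in>K. box_gen j)))"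
        using finP by (intro member_le_sum) auto
      then show "tdeg (s K * (\<Prod>j\<in>K. box_gen j)) \<le> d" unfolding d_def by simp
    qed
    moreover have "tdeg s0 \<le> d" unfolding d_def by simp
    ultimately have "p \<in> PO_deg n d (box_idx n) box_gen"
      unfolding PO_deg_def QM_deg_def
      by (rule_tac CollectI, rule_tac exI[of _ s0], rule_tac exI[of _ s]) (use A in blast)
    then have "p \<in> QM_deg n (d + n) {()} (ball_gen n)" using main_deg by blast
    then show "p \<in> QM n {()} (ball_gen n)" unfolding QM_deg_def QM_def by blast
  qed
qed

end
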